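(* Let $r\ge 1$ and $n\ge 3r+4$ be integers. Then $\rho(K_{3,n-3})>\rho(H_{n,r})$.
   Context: $\rho$ denotes the spectral radius (largest adjacency eigenvalue). $K_1\vee rK_3$ is the join of a single vertex with $r$ disjoint triangles; let $u$ be its vertex of degree $3r$ (any vertex if $r=1$). In $K_{3,n-3r-3}$ (complete bipartite with parts of sizes $3$ and $n-3r-3$), let $vw$ be an edge where $v$ has degree $n-3r-3$ and $w$ has degree $3$. $H_{n,r}$ is the graph obtained from the disjoint union of $K_1\vee rK_3$ and $K_{3,n-3r-3}$ by identifying $u$ with $v$. *)

theory Defs
  imports "Jordan_Normal_Form.Spectral_Radius"
begin

text \<open>Simple graphs on the vertex set {0..<n}, given by a symmetric irreflexive
adjacency predicate. The adjacency matrix is the n x n 0/1 matrix (over complex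
numbers, so that the library notion of spectral radius applies).\<close>

definition adj_mat :: "nat \<Rightarrow> (nat \<Rightarrow> nat \<Rightarrow> bool) \<Rightarrow> complex mat" where
  "adj_mat n E = mat n n (\<lambda>(i, j). if E i j then 1 else 0)"

definition graph_rho :: "nat \<Rightarrow> (nat \<Rightarrow> nat \<Rightarrow> bool) \<Rightarrow> real" where
  "graph_rho n E = spectral_radius (adj_mat n E)"

definition Kbip_adj :: "nat \<Rightarrow> nat \<Rightarrow> nat \<Rightarrow> nat \<Rightarrow> bool" where
  "Kbip_adj s n i j \<longleftrightarrow> i < n \<and> j < n \<and> ((i < s \<and> s \<le> j) \<or> (j < s \<and> s \<le> i))"

text \<open>H_{n,r} on {0..<n}: vertex 0 is the identified vertex u = v.
  Vertices 1..3r form r triangles {3k+1,3k+2,3k+3} (k < r), all joined to 0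
  (this is K_1 join rK_3).  The 3-side of K_{3,n-3r-3} is {0, 3r+1, 3r+2},
  the other side is {3r+3..<n}, of size n-3r-3.\<close>
definition H_adj :: "nat \<Rightarrow> nat \<Rightarrow> nat \<Rightarrow> nat \<Rightarrow> bool" where
  "H_adj n r i j \<longleftrightarrow> i < n \<and> j < n \<and> i \<noteq> j \<and>
     ( (1 \<le> i \<and> i \<le> 3*r \<and> 1 \<le> j \<and> j \<le> 3*r \<and> (i - 1) div 3 = (j - 1) div 3)
     \<or> (i = 0 \<and> 1 \<le> j \<and> j \<le> 3*r) \<or> (j = 0 \<and> 1 \<le> i \<and> i \<le> 3*r)
     \<or> ((i = 0 \<or> i = 3*r+1 \<or> i = 3*r+2) \<and> 3*r+3 \<le> j)
     \<or> ((j = 0 \<or> j = 3*r+1 \<or> j = 3*r+2) \<and> 3*r+3 \<le> i))"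

end

theory Submission
  imports Defs
begin


lemma adj_mult: assumes "v \<in> carrier_vec n" "i < n"
  shows "(adj_mat n E *\<^sub>v v) $ i = (\<Sum>j<n. if E i j then v $ j else 0)"
  using assms by (auto simp: adj_mat_def mult_mat_vec_def scalar_prod_def lessThan_atLeast0 intro!: sum.cong)

lemma adj_carrier: "adj_mat n E \<in> carrier_mat n n" by (simp add: adj_mat_def)

lemma rho_lower:
  fixes x :: "nat \<Rightarrow> real" and \<mu> :: real
  assumes eq: "\<forall>i<n. (\<Sum>j<n. if E i j then x j else 0) = \<mu> * x i"
    and nz: "i0 < n" "x i0 \<noteq> 0"
  shows "\<bar>\<mu>\<bar> \<le> graph_rho n E"
proof -
  define v where "v = vec n (\<lambda>j. complex_of_real (x j))"
  have v: "v \<in> carrier_vec n" by (simp add: v_def)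
  have "v \<noteq> 0\<^sub>v n" using nz by (auto simp: v_def dest!: arg_cong[where f="\<lambda>w. w $ i0"])
  moreover have "adj_mat n E *\<^sub>v v = complex_of_real \<mu> \<cdot>\<^sub>v v"
  proof (rule eq_vecI)
    fix i assume i: "i < dim_vec (complex_of_real \<mu> \<cdot>\<^sub>v v)"
    hence i: "i < n" using v by simp
    have "(adj_mat n E *\<^sub>v v) $ i = (\<Sum>j<n. if E i j then complex_of_real (x j) else 0)"
      unfolding adj_mult[OF v i] using i by (intro sum.cong) (auto simp: v_def)
    also have "\<dots> = complex_of_real (\<Sum>j<n. if E i j then x j else 0)"
      by (simp add: of_real_sum if_distrib cong: if_cong)
    also have "\<dots> = complex_of_real \<mu> * v $ i" using eq i by (simp add: v_def)
    finally show "(adj_mat n E *\<^sub>v v) $ i = (complex_of_real \<mu> \<cdot>\<^sub>v v) $ i" using i v by simp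
  qed (simp add: adj_mat_def v_def)
  ultimately have "eigenvector (adj_mat n E) v (complex_of_real \<mu>)"
    using v by (simp add: eigenvector_def adj_mat_def)
  hence "complex_of_real \<mu> \<in> spectrum (adj_mat n E)" by (auto simp: spectrum_def eigenvalue_def)
  hence sp: "norm (complex_of_real \<mu>) \<in> norm ` spectrum (adj_mat n E)" by (rule imageI)
  have "norm (complex_of_real \<mu>) \<le> graph_rho n E"
    unfolding graph_rho_def using nz by (intro spectral_radius_mem_max(2)[OF adj_carrier[of n E] _ sp]) auto
  thus ?thesis by simp
qed

lemma rho_upper:
  fixes x :: "nat \<Rightarrow> real" and s :: real
  assumes n: "n > 0" and pos: "\<forall>i<n. x i > 0"
    and lt: "\<forall>i<n. (\<Sum>j<n. if E i j then x j else 0) < s * x i"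
  shows "graph_rho n E < s"
proof -
  obtain lam where lam: "lam \<in> spectrum (adj_mat n E)" and r: "graph_rho n E = norm lam"
    using spectral_radius_mem_max(1)[OF adj_carrier n] unfolding graph_rho_def by auto
  then obtain v where ev: "eigenvector (adj_mat n E) v lam" by (auto simp: spectrum_def eigenvalue_def)
  hence v: "v \<in> carrier_vec n" and vnz: "v \<noteq> 0\<^sub>v n" and Av: "adj_mat n E *\<^sub>v v = lam \<cdot>\<^sub>v v"
    by (auto simp: eigenvector_def adj_mat_def)
  define w where "w j = norm (v $ j)" for j
  obtain j0 where j0: "j0 < n" "v $ j0 \<noteq> 0"
    using vnz v by (metis carrier_vecD eq_vecI index_zero_vec(1) index_zero_vec(2))
  define f where "f j = w j / x j" for j
  define M where "M = Max (f ` {..<n})"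
  have "M \<in> f ` {..<n}" unfolding M_def using n by (intro Max_in) auto
  then obtain i0 where i0: "i0 < n" "f i0 = M" by auto
  have fle: "f j \<le> f i0" if "j < n" for j unfolding i0(2) M_def using that by (intro Max_ge) auto
  have "f j0 > 0" using j0 pos by (simp add: f_def w_def)
  hence t0: "f i0 > 0" using fle[OF j0(1)] by simp
  have wi0: "w i0 > 0" using t0 pos i0 unfolding f_def by (auto simp: zero_less_divide_iff)
  have wle: "w j \<le> f i0 * x j" if "j < n" for j
    using fle[OF that] pos that by (simp add: f_def divide_le_eq)
  have "norm lam * w i0 = norm ((lam \<cdot>\<^sub>v v) $ i0)" using i0 v by (simp add: w_def norm_mult)
  also have "\<dots> = norm (\<Sum>j<n. if E i0 j then v $ j else 0)" using adj_mult[OF v i0(1), of E] by (simp add: Av)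
  also have "\<dots> \<le> (\<Sum>j<n. norm (if E i0 j then v $ j else 0))" by (rule norm_sum)
  also have "\<dots> \<le> (\<Sum>j<n. if E i0 j then f i0 * x j else 0)"
    by (intro sum_mono) (auto simp: wle[unfolded w_def])
  also have "\<dots> = f i0 * (\<Sum>j<n. if E i0 j then x j else 0)"
    by (simp add: sum_distrib_left if_distrib cong: if_cong)
  also have "\<dots> < f i0 * (s * x i0)" using lt i0 t0 by simp
  also have "\<dots> = s * w i0" using pos i0(1) by (auto simp: f_def)
  finally have "norm lam * w i0 < s * w i0" .
  hence "norm lam < s" using wi0 by simp
  thus ?thesis using r by simp
qed



lemma sum_nbr: fixes n :: nat shows "(\<Sum>j<n. if E i j then x j else (0::real)) = sum x {j. j < n \<and> E i j}"
proof -
  have "{j. j < n \<and> E i j} = {j \<in> {..<n}. E i j}" by auto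
  moreover have "sum x {j \<in> {..<n}. E i j} = (\<Sum>j<n. if E i j then x j else 0)"
    by (rule sum.inter_filter) simp
  ultimately show ?thesis by simp
qed

lemma K_lower:
  fixes n :: nat assumes n: "n \<ge> 4"
  shows "sqrt (3 * (real n - 3)) \<le> graph_rho n (Kbip_adj 3 n)"
proof -
  define a where "a = sqrt (real n - 3)"
  define b where "b = sqrt (3::real)"
  have s: "sqrt (3 * (real n - 3)) = b * a" unfolding a_def b_def real_sqrt_mult[symmetric] ..
  have a2: "a * a = real n - 3" using n by (simp add: a_def)
  have b2: "b * b = 3" by (simp add: b_def)
  define x :: "nat \<Rightarrow> real" where "x j = (if j < 3 then a else b)" for j
  have "\<forall>i<n. (\<Sum>j<n. if Kbip_adj 3 n i j then x j else 0) = (b * a) * x i"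
  proof (intro allI impI)
    fix i assume i: "i < n"
    show "(\<Sum>j<n. if Kbip_adj 3 n i j then x j else 0) = (b * a) * x i"
    proof (cases "i < 3")
      case True
      have "{j. j < n \<and> Kbip_adj 3 n i j} = {3..<n}" using True i by (auto simp: Kbip_adj_def)
      hence "(\<Sum>j<n. if Kbip_adj 3 n i j then x j else 0) = sum x {3..<n}" by (simp add: sum_nbr)
      also have "\<dots> = sum (\<lambda>_. b) {3..<n}" by (intro sum.cong) (auto simp: x_def)
      also have "\<dots> = (real n - 3) * b" using n by (simp add: of_nat_diff)
      also have "\<dots> = (b * a) * x i" unfolding a2[symmetric] x_def using True by (simp add: algebra_simps)
      finally show ?thesis .
    next
      case False
      have "{j. j < n \<and> Kbip_adj 3 n i j} = {0..<3}" using False i n by (auto simp: Kbip_adj_def)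
      hence "(\<Sum>j<n. if Kbip_adj 3 n i j then x j else 0) = sum x {0..<3}" by (simp add: sum_nbr)
      also have "\<dots> = sum (\<lambda>_. a) {0..<3::nat}" by (intro sum.cong) (auto simp: x_def)
      also have "\<dots> = 3 * a" by simp
      also have "\<dots> = (b * a) * x i" using False b2 by (simp add: x_def algebra_simps)
      finally show ?thesis .
    qed
  qed
  moreover have "x 0 \<noteq> 0" using n by (simp add: x_def a_def)
  ultimately have "\<bar>b * a\<bar> \<le> graph_rho n (Kbip_adj 3 n)" using n by (intro rho_lower[of n _ x _ 0]) auto
  thus ?thesis using s by simp
qed



lemma alg:
  fixes rr mm s :: real
  assumes r: "rr \<ge> 1" and m: "mm \<ge> 1" and s: "s > 0" and s2: "s * s = 9*rr + 3*mm"
  defines "p \<equiv> s - 2" and "q \<equiv> 9*rr + mm"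
  defines "L \<equiv> 3*rr/p + mm*s/q"
  defines "\<theta> \<equiv> (1 + L/s)/2"
  defines "\<delta> \<equiv> (1 - \<theta>)/4"
  shows "p > 0" "q > 0" "L < s" "\<theta> > 0" "\<delta> > 0"
    "3*rr*(1/p) + mm*(s/q) < s * \<theta>"
    "\<theta> + 2*(1/p) < s * (1/p)"
    "mm * (s/q) < s * (mm/q + \<delta>)"
    "\<theta> + 2*(mm/q + \<delta>) < s * (s/q)"
proof -
  have "s * s > 4" using s2 r m by simp
  hence s2': "s > 2"
  proof -
    assume h: "s * s > 4"
    show "s > 2"
    proof (rule ccontr)
      assume "\<not> s > 2"
      hence "s * s \<le> 2 * 2" using s by (intro mult_mono) auto
      thus False using h by simp
    qed
  qed
  thus p: "p > 0" by (simp add: p_def)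
  show q: "q > 0" using r m by (simp add: q_def)
  have rr: "rr*rr \<ge> rr" using r by (simp add: mult_le_cancel_left1)
  have rm: "rr*mm \<ge> mm" using r m by (simp add: mult_le_cancel_right1)
  have e1: "(18*rr+8*mm)^2 = 324*(rr*rr) + 288*(rr*mm) + 64*(mm*mm)"
    by (simp add: power2_eq_square algebra_simps)
  have e2: "(6*s)^2 = 36*(9*rr+3*mm)" using s2 by (simp add: power2_eq_square)
  have mm0: "mm*mm \<ge> 0" by simp
  have e3: "36*(9*rr+3*mm) = 324*rr + 108*mm" by simp
  have sq: "(6*s)^2 < (18*rr + 8*mm)^2"
    unfolding e1 e2 e3 using mm0 rr rm m r by linarith
  have six: "6 * s < 18*rr + 8*mm" by (rule power_less_imp_less_base[OF sq]) (use r m in simp)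
  have "(s*p*q) - (3*rr*q + mm*s*p) = (s*s)*(9*rr) - 18*rr*s - 27*rr*rr - 3*rr*mm"
    unfolding p_def q_def by (simp add: algebra_simps)
  also have "\<dots> = 3*rr*(18*rr+8*mm-6*s)" unfolding s2 by (simp add: algebra_simps)
  also have "\<dots> > 0" using six r by (intro mult_pos_pos) auto
  finally have key: "3*rr*q + mm*s*p < s*p*q" by simp
  have pq: "p*q > 0" using p q by simp
  have eL: "L = (3*rr*q + mm*s*p)/(p*q)" unfolding L_def using p q by (simp add: field_simps)
  have "(3*rr*q + mm*s*p)/(p*q) < (s*p*q)/(p*q)" using key pq by (intro divide_strict_right_mono) auto
  also have "(s*p*q)/(p*q) = s" using p q by simp
  finally show L: "L < s" unfolding eL .
  have L0: "L \<ge> 0" unfolding L_def using p q r m s by simp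
  have sth: "s * \<theta> = (s + L)/2" unfolding \<theta>_def using s by (simp add: field_simps)
  show th: "\<theta> > 0" unfolding \<theta>_def using L0 s by (simp add: add_pos_nonneg)
  have Ls: "L/s < 1" using L s by simp
  have th1: "\<theta> < 1" unfolding \<theta>_def using Ls by simp
  thus dl: "\<delta> > 0" by (simp add: \<delta>_def)
  have "3*rr*(1/p) + mm*(s/q) = L" unfolding L_def by simp
  thus "3*rr*(1/p) + mm*(s/q) < s * \<theta>" unfolding sth using L by simp
  have "s*(1/p) = 1 + 2*(1/p)" using p unfolding p_def by (simp add: field_simps)
  thus "\<theta> + 2*(1/p) < s * (1/p)" using th1 by simp
  show "mm * (s/q) < s * (mm/q + \<delta>)" using dl s by (simp add: distrib_left mult.commute)
  have "s*(s/q) = (s*s)/q" by simp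
  also have "\<dots> = (q + 2*mm)/q" unfolding s2 q_def by simp
  also have "\<dots> = 1 + 2*(mm/q)" using q by (simp add: add_divide_distrib)
  finally have e: "s*(s/q) = 1 + 2*(mm/q)" .
  have "\<theta> + 2*\<delta> < 1" using th1 unfolding \<delta>_def by (simp add: field_simps)
  thus "\<theta> + 2*(mm/q + \<delta>) < s * (s/q)" unfolding e by simp
qed


lemma div3: fixes a k :: nat shows "a div 3 = k \<longleftrightarrow> 3*k \<le> a \<and> a < 3*k+3"
proof
  assume h: "a div 3 = k"
  have "a = 3 * (a div 3) + a mod 3" by simp
  moreover have "a mod 3 < 3" by simp
  ultimately show "3*k \<le> a \<and> a < 3*k+3" using h by linarith
next
  assume "3*k \<le> a \<and> a < 3*k+3"
  thus "a div 3 = k" by (intro div_nat_eqI) auto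
qed
lemma blk: fixes i j r :: nat assumes "1 \<le> i" "i \<le> 3*r"
  shows "(1 \<le> j \<and> j \<le> 3*r \<and> (i-1) div 3 = (j-1) div 3) \<longleftrightarrow> (3*((i-1) div 3)+1 \<le> j \<and> j \<le> 3*((i-1) div 3)+3)"
proof -
  define k where "k = (i-1) div 3"
  have ik: "3*k \<le> i-1" "i-1 < 3*k+3" using div3[of "i-1" k] by (simp_all add: k_def)
  have jk: "(j-1) div 3 = k \<longleftrightarrow> 3*k \<le> j-1 \<and> j-1 < 3*k+3" by (rule div3)
  show ?thesis unfolding k_def[symmetric]
  proof
    assume h: "1 \<le> j \<and> j \<le> 3*r \<and> k = (j-1) div 3"
    then have h2: "3*k \<le> j-1 \<and> j-1 < 3*k+3" using jk by simp
    have j1: "1 \<le> j" using h by simp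
    show "3*k+1 \<le> j \<and> j \<le> 3*k+3" using h2 j1 by arith
  next
    assume h: "3*k+1 \<le> j \<and> j \<le> 3*k+3"
    have "3*k \<le> j-1 \<and> j-1 < 3*k+3" using h by arith
    hence "(j-1) div 3 = k" using jk by simp
    moreover have "j \<le> 3*r" using h ik assms by arith
    ultimately show "1 \<le> j \<and> j \<le> 3*r \<and> k = (j-1) div 3" using h by simp
  qed
qed

lemma H_upper:
  fixes n r :: nat assumes r1: "r \<ge> 1" and n: "n \<ge> 3 * r + 4"
  shows "graph_rho n (H_adj n r) < sqrt (3 * (real n - 3))"
proof -
  define s where "s = sqrt (3 * (real n - 3))"
  define m where "m = n - (3*r+3)"
  define rr where "rr = real r"
  define mm where "mm = real m"
  have nm: "real n = mm + 3*rr + 3" using n by (simp add: mm_def rr_def m_def of_nat_diff)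
  have r': "rr \<ge> 1" using r1 by (simp add: rr_def)
  have m': "mm \<ge> 1" using n by (simp add: mm_def m_def)
  have s0: "s > 0" using n by (simp add: s_def)
  have s2: "s * s = 9*rr + 3*mm" using n r' m' unfolding s_def by (simp add: nm algebra_simps)
  define p where "p = s - 2"
  define q where "q = 9*rr + mm"
  define L where "L = 3*rr/p + mm*s/q"
  define \<theta> where "\<theta> = (1 + L/s)/2"
  define \<delta> where "\<delta> = (1 - \<theta>)/4"
  note A = alg[OF r' m' s0 s2, folded p_def q_def, folded L_def, folded \<theta>_def, folded \<delta>_def]
  define x :: "nat \<Rightarrow> real" where
    "x j = (if j = 0 then \<theta> else if j \<le> 3*r then 1/p else if j \<le> 3*r+2 then mm/q + \<delta> else s/q)" for j
  have npos: "n > 0" using n by simp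
  have mq: "mm/q > 0" "s/q > 0" using A(2) m' s0 by auto
  have xpos: "\<forall>i<n. x i > 0" using A mq by (simp add: x_def add_pos_pos)
  have rows: "\<forall>i<n. (\<Sum>j<n. if H_adj n r i j then x j else 0) < s * x i"
  proof (intro allI impI)
    fix i assume i: "i < n"
    consider "i = 0" | "1 \<le> i \<and> i \<le> 3*r" | "i = 3*r+1 \<or> i = 3*r+2" | "3*r+3 \<le> i" by linarith
    then show "(\<Sum>j<n. if H_adj n r i j then x j else 0) < s * x i"
    proof cases
      case 1
      have N: "{j. j < n \<and> H_adj n r i j} = {1..3*r} \<union> {3*r+3..<n}" using 1 n by (auto simp: H_adj_def)
      have "sum x ({1..3*r} \<union> {3*r+3..<n}) = sum x {1..3*r} + sum x {3*r+3..<n}"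
        by (intro sum.union_disjoint) auto
      also have "sum x {1..3*r} = sum (\<lambda>_. 1/p) {1..3*r}" by (intro sum.cong) (auto simp: x_def)
      also have "\<dots> = 3*rr*(1/p)" by (simp add: rr_def)
      also have "sum x {3*r+3..<n} = sum (\<lambda>_. s/q) {3*r+3..<n}" by (intro sum.cong) (auto simp: x_def)
      also have "\<dots> = mm*(s/q)" by (simp add: mm_def m_def)
      finally have "(\<Sum>j<n. if H_adj n r i j then x j else 0) = 3*rr*(1/p) + mm*(s/q)"
        by (simp add: sum_nbr N)
      thus ?thesis using A 1 by (simp add: x_def)
    next
      case 2
      define k where "k = (i-1) div 3"
      have b1: "3*k+1 \<le> i \<and> i \<le> 3*k+3" using blk[of i r i] 2 unfolding k_def[symmetric] by simp
      have b2: "3*k+3 \<le> 3*r" using blk[of i r "3*k+3"] 2 unfolding k_def[symmetric] by simp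
      have ik: "3*k+1 \<le> i" "i \<le> 3*k+3" "3*k+3 \<le> 3*r" using b1 b2 by auto
      have hj: "H_adj n r i j \<longleftrightarrow> j < n \<and> j \<noteq> i \<and> ((1 \<le> j \<and> j \<le> 3*r \<and> k = (j-1) div 3) \<or> j = 0)" for j
        using 2 i unfolding H_adj_def k_def by auto
      have bj: "(1 \<le> j \<and> j \<le> 3*r \<and> k = (j-1) div 3) \<longleftrightarrow> (3*k+1 \<le> j \<and> j \<le> 3*k+3)" for j
        using blk[of i r j, OF conjunct1[OF 2] conjunct2[OF 2]] unfolding k_def[symmetric] .
      have hj2: "H_adj n r i j \<longleftrightarrow> j < n \<and> j \<noteq> i \<and> ((3*k+1 \<le> j \<and> j \<le> 3*k+3) \<or> j = 0)" for j
        unfolding hj bj ..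
      have N: "{j. j < n \<and> H_adj n r i j} = insert 0 ({3*k+1..3*k+3} - {i})"
        unfolding hj2 using 2 n ik by auto
      have "sum x (insert 0 ({3*k+1..3*k+3} - {i})) = x 0 + sum x ({3*k+1..3*k+3} - {i})"
        by (intro sum.insert) auto
      also have "sum x ({3*k+1..3*k+3} - {i}) = sum (\<lambda>_. 1/p) ({3*k+1..3*k+3} - {i})"
        using ik by (intro sum.cong) (auto simp: x_def)
      also have "\<dots> = 2*(1/p)" using ik by (simp add: card_Diff_singleton)
      finally have "(\<Sum>j<n. if H_adj n r i j then x j else 0) = \<theta> + 2*(1/p)"
        by (simp add: sum_nbr N x_def)
      thus ?thesis using A 2 by (simp add: x_def)
    next
      case 3
      have N: "{j. j < n \<and> H_adj n r i j} = {3*r+3..<n}" using 3 n by (auto simp: H_adj_def)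
      have "sum x {3*r+3..<n} = sum (\<lambda>_. s/q) {3*r+3..<n}" by (intro sum.cong) (auto simp: x_def)
      also have "\<dots> = mm*(s/q)" by (simp add: mm_def m_def)
      finally have "(\<Sum>j<n. if H_adj n r i j then x j else 0) = mm*(s/q)"
        by (simp add: sum_nbr N)
      thus ?thesis using A 3 by (auto simp: x_def)
    next
      case 4
      have N: "{j. j < n \<and> H_adj n r i j} = {0, 3*r+1, 3*r+2}" using 4 n i by (auto simp: H_adj_def)
      have "sum x {0, 3*r+1, 3*r+2} = \<theta> + 2*(mm/q + \<delta>)" using r1 by (simp add: x_def)
      hence "(\<Sum>j<n. if H_adj n r i j then x j else 0) = \<theta> + 2*(mm/q + \<delta>)"
        by (simp add: sum_nbr N)
      thus ?thesis using A 4 by (simp add: x_def)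
    qed
  qed
  show ?thesis using rho_upper[OF npos xpos rows] by (simp add: s_def)
qed

theorem lemma4p3:
  fixes n r :: nat
  assumes "r \<ge> 1" and "n \<ge> 3 * r + 4"
  shows "graph_rho n (Kbip_adj 3 n) > graph_rho n (H_adj n r)"
  using H_upper[OF assms] K_lower[of n] assms by linarith

end
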